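(* Let $G$ be a labeled complete bipartite graph with partite sets $V_1,V_2$, let $0<\gamma<\alpha<1/2$, and let $x$ be a fractional clustering of $G$. Run the following algorithm: set $S=V(G)$; while $V_1\cap S\ne\emptyset$, for each $u\in V_1\cap S$ let $T_u=\{w\in S\setminus\{u\}:x_{uw}\le\alpha\}$ and $T^*_u=\{w\in V_2\cap S:x_{uw}\le\gamma\}$, choose a pivot $u\in V_1\cap S$ maximizing $|T^*_u|$, let $T=T_u$, and if $\sum_{w\in V_2\cap T}x_{uw}\ge\alpha|V_2\cap T|/2$ output $\{u\}$ and remove $u$ from $S$, otherwise output $C=\{u\}\cup T$ and remove $C$ from $S$. Consider any iteration in which $C=\{u\}\cup T$ is output (i.e. $\sum_{w\in V_2\cap T}x_{uw}<\alpha|V_2\cap T|/2$), and let $S$ denote the set of remaining vertices at the start of that iteration. Then for every $z\in (V_1\cap S)\setminus C$, \[ \bigl|N^+(z)\cap C\bigr| \le \max\left\{\tfrac{1}{1-2\alpha},\tfrac{2}{\alpha}\right\}\left(\sum_{w\in N^+(z)\cap C}x_{zw}+\sum_{w\in N^-(z)\cap C}(1-x_{zw})\right). \]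
   Context: A fractional clustering of $G$ is a vector $x$ indexed by all unordered pairs of distinct vertices of $G$ with $x_{uv}\in[0,1]$ and $x_{vz}\le x_{vw}+x_{wz}$ for all distinct $v,w,z$; $x_{uu}=0$. $N^+(z)$, $N^-(z)$ are the sets of vertices joined to $z$ by a $+$ edge, resp. $-$ edge (for $z\in V_1$ these lie in $V_2$). (In the paper's terminology: the left side is the total cluster-cost and the sum on the right the total LP-cost of the edges from $z$ to the cluster $C$.) *)

theory Defs
  imports Complex_Main
begin

text \<open>A labeled complete bipartite graph with partite sets V1, V2: every pair
  {v,w} with v in V1, w in V2 is an edge, labelled + (lab v w = True) or - (False).
  The labelling is symmetric.\<close>
definition labeled_cbg :: "'a set \<Rightarrow> 'a set \<Rightarrow> ('a \<Rightarrow> 'a \<Rightarrow> bool) \<Rightarrow> bool" where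
  "labeled_cbg V1 V2 lab \<longleftrightarrow> finite V1 \<and> finite V2 \<and> V1 \<inter> V2 = {} \<and>
     (\<forall>v\<in>V1. \<forall>w\<in>V2. lab v w = lab w v)"

definition is_edge :: "'a set \<Rightarrow> 'a set \<Rightarrow> 'a \<Rightarrow> 'a \<Rightarrow> bool" where
  "is_edge V1 V2 z w \<longleftrightarrow> (z \<in> V1 \<and> w \<in> V2) \<or> (z \<in> V2 \<and> w \<in> V1)"

definition Nplus :: "'a set \<Rightarrow> 'a set \<Rightarrow> ('a \<Rightarrow> 'a \<Rightarrow> bool) \<Rightarrow> 'a \<Rightarrow> 'a set" where
  "Nplus V1 V2 lab z = {w. is_edge V1 V2 z w \<and> lab z w}"

definition Nminus :: "'a set \<Rightarrow> 'a set \<Rightarrow> ('a \<Rightarrow> 'a \<Rightarrow> bool) \<Rightarrow> 'a \<Rightarrow> 'a set" where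
  "Nminus V1 V2 lab z = {w. is_edge V1 V2 z w \<and> \<not> lab z w}"

text \<open>Fractional clustering on vertex set V: a symmetric function on pairs
  (representing the vector indexed by unordered pairs) with values in [0,1],
  zero diagonal, and the triangle inequality for distinct vertices.\<close>
definition frac_clustering :: "'a set \<Rightarrow> ('a \<Rightarrow> 'a \<Rightarrow> real) \<Rightarrow> bool" where
  "frac_clustering V x \<longleftrightarrow>
     (\<forall>u\<in>V. x u u = 0) \<and>
     (\<forall>u\<in>V. \<forall>v\<in>V. u \<noteq> v \<longrightarrow> x u v = x v u \<and> 0 \<le> x u v \<and> x u v \<le> 1) \<and>
     (\<forall>v\<in>V. \<forall>w\<in>V. \<forall>z\<in>V. v \<noteq> w \<and> w \<noteq> z \<and> v \<noteq> z \<longrightarrow> x v z \<le> x v w + x w z)"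

definition Tset :: "('a \<Rightarrow> 'a \<Rightarrow> real) \<Rightarrow> real \<Rightarrow> 'a set \<Rightarrow> 'a \<Rightarrow> 'a set" where
  "Tset x \<alpha> S u = {w \<in> S - {u}. x u w \<le> \<alpha>}"

definition Tstar :: "'a set \<Rightarrow> ('a \<Rightarrow> 'a \<Rightarrow> real) \<Rightarrow> real \<Rightarrow> 'a set \<Rightarrow> 'a \<Rightarrow> 'a set" where
  "Tstar V2 x \<gamma> S u = {w \<in> V2 \<inter> S. x u w \<le> \<gamma>}"

definition is_pivot :: "'a set \<Rightarrow> 'a set \<Rightarrow> ('a \<Rightarrow> 'a \<Rightarrow> real) \<Rightarrow> real \<Rightarrow> 'a set \<Rightarrow> 'a \<Rightarrow> bool" where
  "is_pivot V1 V2 x \<gamma> S u \<longleftrightarrow> u \<in> V1 \<inter> S \<and>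
     (\<forall>u'\<in>V1 \<inter> S. card (Tstar V2 x \<gamma> S u') \<le> card (Tstar V2 x \<gamma> S u))"

definition singleton_case :: "'a set \<Rightarrow> ('a \<Rightarrow> 'a \<Rightarrow> real) \<Rightarrow> real \<Rightarrow> 'a set \<Rightarrow> 'a \<Rightarrow> bool" where
  "singleton_case V2 x \<alpha> S u \<longleftrightarrow>
     (\<Sum>w\<in>V2 \<inter> Tset x \<alpha> S u. x u w) \<ge> \<alpha> * real (card (V2 \<inter> Tset x \<alpha> S u)) / 2"

text \<open>Sets S of remaining vertices that can occur at the start of an iteration
  of the (nondeterministic, because of ties in the pivot choice) algorithm.\<close>
inductive alg_reach :: "'a set \<Rightarrow> 'a set \<Rightarrow> ('a \<Rightarrow> 'a \<Rightarrow> real) \<Rightarrow> real \<Rightarrow> real \<Rightarrow> 'a set \<Rightarrow> bool"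
  for V1 V2 x \<alpha> \<gamma> where
  start: "alg_reach V1 V2 x \<alpha> \<gamma> (V1 \<union> V2)"
| single: "\<lbrakk>alg_reach V1 V2 x \<alpha> \<gamma> S; V1 \<inter> S \<noteq> {}; is_pivot V1 V2 x \<gamma> S u;
            singleton_case V2 x \<alpha> S u\<rbrakk>
           \<Longrightarrow> alg_reach V1 V2 x \<alpha> \<gamma> (S - {u})"
| cluster: "\<lbrakk>alg_reach V1 V2 x \<alpha> \<gamma> S; V1 \<inter> S \<noteq> {}; is_pivot V1 V2 x \<gamma> S u;
            \<not> singleton_case V2 x \<alpha> S u\<rbrakk>
           \<Longrightarrow> alg_reach V1 V2 x \<alpha> \<gamma> (S - ({u} \<union> Tset x \<alpha> S u))"

end

theory Submission
  imports Defs
begin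

lemma reach_sub: "alg_reach V1 V2 x \<alpha> \<gamma> S \<Longrightarrow> S \<subseteq> V1 \<union> V2"
  by (induction rule: alg_reach.induct) auto

theorem lemma6:
  fixes V1 V2 :: "'a set" and lab :: "'a \<Rightarrow> 'a \<Rightarrow> bool"
    and x :: "'a \<Rightarrow> 'a \<Rightarrow> real" and \<alpha> \<gamma> :: real
    and S :: "'a set" and u z :: 'a
  assumes G: "labeled_cbg V1 V2 lab"
    and params: "0 < \<gamma>" "\<gamma> < \<alpha>" "\<alpha> < 1/2"
    and x: "frac_clustering (V1 \<union> V2) x"
    and reach: "alg_reach V1 V2 x \<alpha> \<gamma> S"
    and nonempty: "V1 \<inter> S \<noteq> {}"
    and piv: "is_pivot V1 V2 x \<gamma> S u"
    and clus: "(\<Sum>w\<in>V2 \<inter> Tset x \<alpha> S u. x u w) < \<alpha> * real (card (V2 \<inter> Tset x \<alpha> S u)) / 2"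
    and z: "z \<in> (V1 \<inter> S) - ({u} \<union> Tset x \<alpha> S u)"
  shows "real (card (Nplus V1 V2 lab z \<inter> ({u} \<union> Tset x \<alpha> S u)))
     \<le> max (1 / (1 - 2 * \<alpha>)) (2 / \<alpha>) *
        ((\<Sum>w\<in>Nplus V1 V2 lab z \<inter> ({u} \<union> Tset x \<alpha> S u). x z w)
         + (\<Sum>w\<in>Nminus V1 V2 lab z \<inter> ({u} \<union> Tset x \<alpha> S u). 1 - x z w))"
proof -
  define W where "W = V2 \<inter> Tset x \<alpha> S u"
  define P where "P = {w \<in> W. lab z w}"
  define M where "M = {w \<in> W. \<not> lab z w}"
  define d where "d = x u z"
  have fin: "finite V2" "V1 \<inter> V2 = {}" using G unfolding labeled_cbg_def by auto
  have Ssub: "S \<subseteq> V1 \<union> V2" using reach_sub[OF reach] .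
  have uV1: "u \<in> V1" "u \<in> S" using piv unfolding is_pivot_def by auto
  have zV1: "z \<in> V1" "z \<in> S" "z \<noteq> u" "z \<notin> Tset x \<alpha> S u" using z by auto
  have dgt: "d > \<alpha>" using zV1 unfolding d_def Tset_def by auto
  have finW: "finite W" using fin unfolding W_def by auto
  have finP: "finite P" "finite M" using finW unfolding P_def M_def by auto
  have WV: "\<And>w. w \<in> W \<Longrightarrow> w \<in> V2 \<and> w \<noteq> u \<and> w \<noteq> z \<and> x u w \<le> \<alpha>"
    using fin uV1 zV1 unfolding W_def Tset_def by auto
  have eqP: "Nplus V1 V2 lab z \<inter> ({u} \<union> Tset x \<alpha> S u) = P"
    using fin uV1 zV1 unfolding P_def W_def Nplus_def is_edge_def by auto
  have eqM: "Nminus V1 V2 lab z \<inter> ({u} \<union> Tset x \<alpha> S u) = M"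
    using fin uV1 zV1 unfolding M_def W_def Nminus_def is_edge_def by auto
  have xs: "\<And>a b. a \<in> V1 \<union> V2 \<Longrightarrow> b \<in> V1 \<union> V2 \<Longrightarrow> a \<noteq> b \<Longrightarrow> x a b = x b a \<and> 0 \<le> x a b \<and> x a b \<le> 1"
    using x unfolding frac_clustering_def by blast
  have tri: "\<And>a b c. a \<in> V1 \<union> V2 \<Longrightarrow> b \<in> V1 \<union> V2 \<Longrightarrow> c \<in> V1 \<union> V2 \<Longrightarrow> a \<noteq> b \<Longrightarrow> b \<noteq> c \<Longrightarrow> a \<noteq> c \<Longrightarrow> x a c \<le> x a b + x b c"
    using x unfolding frac_clustering_def by blast
  have lowP: "\<And>w. w \<in> W \<Longrightarrow> x z w \<ge> d - x u w"
  proof -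
    fix w assume w: "w \<in> W"
    note h = WV[OF w]
    have "x u z \<le> x u w + x w z" using tri[of u w z] h uV1 zV1 by auto
    moreover have "x w z = x z w" using xs[of w z] h zV1 by auto
    ultimately show "x z w \<ge> d - x u w" unfolding d_def by linarith
  qed
  have lowM: "\<And>w. w \<in> W \<Longrightarrow> 1 - x z w \<ge> 1 - d - x u w"
  proof -
    fix w assume w: "w \<in> W"
    note h = WV[OF w]
    have "x z w \<le> x z u + x u w" using tri[of z u w] h uV1 zV1 by auto
    moreover have "x z u = x u z" using xs[of z u] h uV1 zV1 by auto
    ultimately show "1 - x z w \<ge> 1 - d - x u w" unfolding d_def by linarith
  qed
  have nn: "\<And>w. w \<in> W \<Longrightarrow> 0 \<le> x z w \<and> x z w \<le> 1"
    using xs WV zV1 by (metis UnI1 UnI2)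
  have PM: "P \<subseteq> W" "M \<subseteq> W" unfolding P_def M_def by auto
  have PMW: "P \<union> M = W" "P \<inter> M = {}" unfolding P_def M_def by auto
  have cardW: "real (card W) = real (card P) + real (card M)"
    using card_Un_disjoint[OF finP PMW(2)] PMW(1) by simp
  have sumW: "(\<Sum>w\<in>W. x u w) = (\<Sum>w\<in>P. x u w) + (\<Sum>w\<in>M. x u w)"
    using sum.union_disjoint[OF finP PMW(2)] PMW(1) by simp
  define cost where "cost = (\<Sum>w\<in>P. x z w) + (\<Sum>w\<in>M. 1 - x z w)"
  have sP: "(\<Sum>w\<in>P. x z w) \<ge> (\<Sum>w\<in>P. d - x u w)"
    by (rule sum_mono) (use lowP PM in auto)
  have sM: "(\<Sum>w\<in>M. 1 - x z w) \<ge> (\<Sum>w\<in>M. 1 - d - x u w)"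
    by (rule sum_mono) (use lowM PM in auto)
  have sM0: "(\<Sum>w\<in>M. 1 - x z w) \<ge> 0"
    by (rule sum_nonneg) (use nn PM in auto)
  have sP0: "(\<Sum>w\<in>P. x z w) \<ge> 0"
    by (rule sum_nonneg) (use nn PM in auto)
  have sPa: "(\<Sum>w\<in>P. d - x u w) \<ge> (\<Sum>w\<in>P. d - \<alpha>)"
    by (rule sum_mono) (use WV PM in auto)
  have eP: "(\<Sum>w\<in>P. d - x u w) = real (card P) * d - (\<Sum>w\<in>P. x u w)"
    by (simp add: sum_subtractf)
  have eM: "(\<Sum>w\<in>M. 1 - d - x u w) = real (card M) * (1 - d) - (\<Sum>w\<in>M. x u w)"
    by (simp add: sum_subtractf)
  have clus': "(\<Sum>w\<in>W. x u w) < \<alpha> * real (card W) / 2" using clus unfolding W_def .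
  have cost_ge: "cost \<ge> real (card P) * \<alpha> / 2"
  proof (cases "d \<le> 1 - \<alpha>/2")
    case True
    have a: "real (card P) * (d - \<alpha>/2) \<ge> real (card P) * (\<alpha>/2)"
      using dgt by (intro mult_left_mono) auto
    have b: "real (card M) * (1 - d - \<alpha>/2) \<ge> 0" using True by auto
    show ?thesis using sP sM eP eM sumW cardW clus' a b unfolding cost_def
      by (simp add: algebra_simps)
  next
    case False
    have "(\<Sum>w\<in>P. d - \<alpha>) = real (card P) * (d - \<alpha>)" by simp
    moreover have "real (card P) * (d - \<alpha>) \<ge> real (card P) * (\<alpha>/2)"
      using False params by (intro mult_left_mono) auto
    ultimately show ?thesis using sP sPa sM0 unfolding cost_def by linarith
  qed
  have cost0: "cost \<ge> 0" using sP0 sM0 unfolding cost_def by linarith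
  have K: "max (1 / (1 - 2 * \<alpha>)) (2 / \<alpha>) * cost \<ge> (2/\<alpha>) * cost"
    using cost0 by (intro mult_right_mono) auto
  have "(2/\<alpha>) * cost \<ge> (2/\<alpha>) * (real (card P) * \<alpha> / 2)"
    using cost_ge params by (intro mult_left_mono) auto
  moreover have "(2/\<alpha>) * (real (card P) * \<alpha> / 2) = real (card P)" using params by simp
  ultimately show ?thesis using K unfolding eqP eqM cost_def by linarith
qed

end
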